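(* Let $r\in\mathbb{Z}$, let $P(r)$ be the lower-triangular matrix with $(n,k)$ entry $[x^n]\,\frac{1+rx^2}{1+x^2}\left(\frac{x}{1+x^2}\right)^k$, let $M(r)=P(r)^{-1}$, and let $s_n(r)=\sum_{k=0}^n M(r)_{n,k}$ be the row sums of $M(r)$. Then the Hankel transform of $s_n(r)$ is $$H_n(r):=\det\big(s_{i+j}(r)\big)_{0\le i,j\le n}= r^n U_n\left(\frac{\frac{1}{r}-1}{2}\right)\quad\text{for all } n\ge 0,$$ where $U_n$ is the Chebyshev polynomial of the second kind and the right-hand side is understood as the polynomial in $r$ it defines.
   Context: $[x^n]h(x)$ denotes the coefficient of $x^n$ in $h(x)$. $U_n$ is the Chebyshev polynomial of the second kind ($U_0=1$, $U_1(y)=2y$, $U_{n}(y)=2yU_{n-1}(y)-U_{n-2}(y)$); $r^nU_n\left(\frac{1/r-1}{2}\right)$ is a polynomial in $r$ (beginning $1,\ 1-r,\ 1-2r,\ r^3+r^2-3r+1,\ldots$). $M(r)$ is the moment matrix of the restricted Chebyshev–Boubaker polynomials, equal to the Riordan array $\left(\frac{\sqrt{1-4x^2}(r-1)+r+1}{2(r+x^2(r-1)^2)}, \frac{1-\sqrt{1-4x^2}}{2x}\right)$. *)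

theory Defs
  imports "Jordan_Normal_Form.Determinant" "HOL-Computational_Algebra.Formal_Power_Series"
    "HOL-Computational_Algebra.Polynomial"
begin

definition Pmat :: "int \<Rightarrow> nat \<Rightarrow> nat \<Rightarrow> rat" where
  "Pmat r n k = fps_nth ((1 + fps_const (of_int r) * fps_X ^ 2) * inverse (1 + fps_X ^ 2)
                         * (fps_X * inverse (1 + fps_X ^ 2)) ^ k) n"

fun chebU :: "nat \<Rightarrow> rat poly" where
  "chebU 0 = 1"
| "chebU (Suc 0) = [:0, 2:]"
| "chebU (Suc (Suc n)) = [:0, 2:] * chebU (Suc n) - chebU n"

text \<open>The polynomial in r defined by r^n U_n((1/r - 1)/2): writing U_n(y) = sum_k c_k y^k
  (k <= n), it is sum_k c_k r^(n-k) ((1-r)/2)^k.\<close>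
definition chebU_rpoly :: "nat \<Rightarrow> rat poly" where
  "chebU_rpoly n = (\<Sum>k\<le>n. smult (coeff (chebU n) k) ([:0, 1:] ^ (n - k) * [:1/2, -1/2:] ^ k))"

end

theory Submission
  imports Defs
begin

lemma F1_inv: "(1 + fps_X ^ 2 :: rat fps) * inverse (1 + fps_X ^ 2) = 1"
  by (subst mult.commute, rule inverse_mult_eq_1) simp

lemma F1_nth_SS: "fps_nth ((1 + fps_X ^ 2) * (B :: rat fps)) (Suc (Suc n)) = fps_nth B (Suc (Suc n)) + fps_nth B n"
  by (simp add: distrib_right fps_X_power_mult_nth)
lemma F1_nth_0: "fps_nth ((1 + fps_X ^ 2) * (B :: rat fps)) 0 = fps_nth B 0"
  by (simp add: distrib_right fps_X_power_mult_nth)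
lemma F1_nth_1: "fps_nth ((1 + fps_X ^ 2) * (B :: rat fps)) (Suc 0) = fps_nth B (Suc 0)"
  by (simp add: distrib_right fps_X_power_mult_nth)

context fixes r :: int begin
definition "GG = (1 + fps_const (of_int r) * fps_X ^ 2) * inverse (1 + fps_X ^ 2 :: rat fps)"
definition "FF = fps_X * inverse (1 + fps_X ^ 2 :: rat fps)"
lemma Pmat_GF: "Pmat r n k = fps_nth (GG * FF ^ k) n"
  unfolding Pmat_def GG_def FF_def by simp
lemma F1_G: "(1 + fps_X ^ 2) * GG = 1 + fps_const (of_int r) * fps_X ^ 2"
proof -
  have "(1 + fps_X ^ 2) * GG = (1 + fps_const (of_int r) * fps_X ^ 2) * ((1 + fps_X ^ 2) * inverse (1 + fps_X ^ 2))"
    unfolding GG_def by (simp add: ac_simps)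
  thus ?thesis by (simp add: F1_inv)
qed
lemma F1_GF: "(1 + fps_X ^ 2) * (GG * FF ^ Suc k) = fps_X * (GG * FF ^ k)"
proof -
  have "(1 + fps_X ^ 2) * (GG * FF ^ Suc k) = fps_X * (GG * FF ^ k) * ((1 + fps_X ^ 2) * inverse (1 + fps_X ^ 2))"
    unfolding FF_def by (simp add: ac_simps)
  thus ?thesis by (simp add: F1_inv)
qed
lemma p_0_Suc: "Pmat r 0 (Suc k) = 0"
  by (simp add: Pmat_GF FF_def fps_nth_power_0)
lemma p_1_Suc: "Pmat r (Suc 0) (Suc k) = Pmat r 0 k"
  using arg_cong[OF F1_GF[of k], of "\<lambda>f. fps_nth f (Suc 0)"]
  by (simp add: Pmat_GF F1_nth_1 del: power_Suc)
lemma p_SS_Suc: "Pmat r (Suc (Suc n)) (Suc k) + Pmat r n (Suc k) = Pmat r (Suc n) k"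
  using arg_cong[OF F1_GF[of k], of "\<lambda>f. fps_nth f (Suc (Suc n))"]
  by (simp add: Pmat_GF F1_nth_SS del: power_Suc)
lemma p_00: "Pmat r 0 0 = 1"
  using arg_cong[OF F1_G, of "\<lambda>f. fps_nth f 0"] by (simp add: Pmat_GF F1_nth_0)
lemma p_10: "Pmat r (Suc 0) 0 = 0"
  using arg_cong[OF F1_G, of "\<lambda>f. fps_nth f (Suc 0)"] by (simp add: Pmat_GF F1_nth_1 fps_X_power_mult_right_nth)
lemma p_SS_0: "Pmat r (Suc (Suc n)) 0 + Pmat r n 0 = (if n = 0 then of_int r else 0)"
  using arg_cong[OF F1_G, of "\<lambda>f. fps_nth f (Suc (Suc n))"] by (simp add: Pmat_GF F1_nth_SS fps_X_power_mult_right_nth)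
lemma p_upper: "i < a \<Longrightarrow> Pmat r i a = 0"
proof (induction i arbitrary: a rule: nat_less_induct)
  case (1 i)
  then obtain a' where a: "a = Suc a'" by (cases a) auto
  show ?case
  proof (cases i)
    case 0 thus ?thesis using a p_0_Suc by simp
  next
    case (Suc i')
    show ?thesis
    proof (cases i')
      case 0 thus ?thesis using a Suc 1(2) p_1_Suc p_0_Suc[of "a' - 1"]
        by (cases a') auto
    next
      case (Suc i'')
      have "Pmat r i a = Pmat r (Suc i'') a' - Pmat r i'' (Suc a')"
        using p_SS_Suc[of i'' a'] a \<open>i = Suc i'\<close> Suc by (simp add: algebra_simps)
      also have "\<dots> = 0" using 1 a \<open>i = Suc i'\<close> Suc by simp
      finally show ?thesis .
    qed
  qed
qed
lemma p_diag: "Pmat r i i = 1"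
proof (induction i rule: nat_less_induct)
  case (1 i)
  show ?case
  proof (cases i)
    case 0 thus ?thesis by (simp add: p_00)
  next
    case (Suc i')
    show ?thesis
    proof (cases i')
      case 0 thus ?thesis using Suc p_1_Suc p_00 by simp
    next
      case (Suc i'')
      have "Pmat r i i = Pmat r (Suc i'') (Suc i'') - Pmat r i'' (Suc (Suc i''))"
        using p_SS_Suc[of i'' "Suc i''"] \<open>i = Suc i'\<close> Suc by (simp add: algebra_simps)
      also have "\<dots> = 1" using 1 p_upper[of i'' "Suc (Suc i'')"] \<open>i = Suc i'\<close> Suc by simp
      finally show ?thesis .
    qed
  qed
qed
lemma p_sum_ext: "i \<le> N \<Longrightarrow> (\<Sum>a\<le>N. Pmat r i a * h a) = (\<Sum>a\<le>i. Pmat r i a * h a)"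
  by (rule sum.mono_neutral_right) (auto simp: p_upper)
end
definition ww :: "int \<Rightarrow> (nat \<Rightarrow> rat) \<Rightarrow> nat \<Rightarrow> nat \<Rightarrow> rat" where
  "ww r s i b = (\<Sum>a\<le>i. Pmat r i a * s (a + b))"
definition KK :: "int \<Rightarrow> (nat \<Rightarrow> rat) \<Rightarrow> nat \<Rightarrow> nat \<Rightarrow> rat" where
  "KK r s i j = (\<Sum>b\<le>j. Pmat r j b * ww r s i b)"
definition TT :: "int \<Rightarrow> nat \<Rightarrow> nat \<Rightarrow> rat" where
  "TT r i j = (if i = 0 \<or> j = 0 then 1 else of_nat (min i j) + 1 + (of_nat (min i j) - 1) * of_int r
      - (if i = j then of_int r else 0))"

context
  fixes r :: int and M :: "nat \<Rightarrow> nat \<Rightarrow> rat" and s :: "nat \<Rightarrow> rat"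
  assumes M_lower: "\<And>n k. n < k \<Longrightarrow> M n k = 0"
    and M_inv: "\<And>n k. (\<Sum>j\<le>n. Pmat r n j * M j k) = (if n = k then 1 else 0)"
    and s_def: "\<And>n. s n = (\<Sum>k\<le>n. M n k)"
begin

lemma Ps1: "(\<Sum>j\<le>n. Pmat r n j * s j) = 1"
proof -
  have "(\<Sum>j\<le>n. Pmat r n j * s j) = (\<Sum>j\<le>n. \<Sum>k\<le>n. Pmat r n j * M j k)"
  proof (rule sum.cong[OF refl])
    fix j assume j: "j \<in> {..n}"
    have "(\<Sum>k\<le>n. M j k) = (\<Sum>k\<le>j. M j k)"
      using j by (intro sum.mono_neutral_right) (auto simp: M_lower)
    thus "Pmat r n j * s j = (\<Sum>k\<le>n. Pmat r n j * M j k)"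
      by (simp add: s_def flip: sum_distrib_left)
  qed
  also have "\<dots> = (\<Sum>k\<le>n. \<Sum>j\<le>n. Pmat r n j * M j k)" by (rule sum.swap)
  also have "\<dots> = (\<Sum>k\<le>n. if n = k then 1 else 0)" by (simp add: M_inv)
  also have "\<dots> = 1" by simp
  finally show ?thesis .
qed

lemma s0: "s 0 = 1" using Ps1[of 0] by (simp add: p_00)

lemma w0: "ww r s i 0 = 1" using Ps1[of i] by (simp add: ww_def)

lemma wrec0: "ww r s 0 (Suc b) = ww r s (Suc 0) b"
  by (simp add: ww_def p_00 p_10 p_1_Suc)

lemma wrecS: "ww r s (Suc i) (Suc b) = ww r s (Suc (Suc i)) b + ww r s i b - (if i = 0 then of_int r else 0) * s b"
proof -
  have "ww r s (Suc (Suc i)) b + ww r s i b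
     = (\<Sum>a\<le>Suc (Suc i). (Pmat r (Suc (Suc i)) a + Pmat r i a) * s (a + b))"
    unfolding ww_def distrib_right sum.distrib
    using p_sum_ext[of i "Suc (Suc i)" r "\<lambda>a. s (a + b)"] by simp
  also have "\<dots> = (if i = 0 then of_int r else 0) * s b
       + (\<Sum>a\<le>Suc i. Pmat r (Suc i) a * s (a + Suc b))"
    by (subst sum.atMost_Suc_shift) (simp add: p_SS_0 p_SS_Suc del: sum.atMost_Suc)
  finally show ?thesis by (simp add: ww_def)
qed

lemma K0: "KK r s i 0 = 1" by (simp add: KK_def p_00 w0)

definition "VV i j = (\<Sum>b\<le>j. Pmat r j b * ww r s i (Suc b))"

lemma K1: "KK r s i (Suc 0) = VV i 0"
  by (simp add: KK_def VV_def p_00 p_10 p_1_Suc)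

lemma KSS: "KK r s i (Suc (Suc j)) = (if j = 0 then of_int r else 0) + VV i (Suc j) - KK r s i j"
proof -
  have "KK r s i (Suc (Suc j)) + KK r s i j
     = (\<Sum>b\<le>Suc (Suc j). (Pmat r (Suc (Suc j)) b + Pmat r j b) * ww r s i b)"
    unfolding KK_def distrib_right sum.distrib
    using p_sum_ext[of j "Suc (Suc j)" r "\<lambda>b. ww r s i b"] by simp
  also have "\<dots> = (if j = 0 then of_int r else 0) + VV i (Suc j)"
    by (subst sum.atMost_Suc_shift) (simp add: p_SS_0 p_SS_Suc w0 VV_def del: sum.atMost_Suc)
  finally show ?thesis by simp
qed

lemma V0: "VV 0 j = KK r s (Suc 0) j"
  by (simp add: VV_def KK_def wrec0)

lemma VS: "VV (Suc i) j = KK r s (Suc (Suc i)) j + KK r s i j - (if i = 0 then of_int r else 0)"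
proof -
  have "VV (Suc i) j = (\<Sum>b\<le>j. Pmat r j b * ww r s (Suc (Suc i)) b + Pmat r j b * ww r s i b
      - (if i = 0 then of_int r else 0) * (Pmat r j b * s b))"
    unfolding VV_def wrecS by (rule sum.cong) (auto simp: algebra_simps)
  also have "\<dots> = KK r s (Suc (Suc i)) j + KK r s i j - (if i = 0 then of_int r else 0) * (\<Sum>b\<le>j. Pmat r j b * s b)"
    by (simp add: KK_def sum.distrib sum_subtractf sum_distrib_left)
  finally show ?thesis using Ps1[of j] by simp
qed

lemma K_closed: "KK r s i j = TT r i j"
proof (induction j arbitrary: i rule: nat_less_induct)
  case (1 j)
  show ?case
  proof (cases j)
    case 0 thus ?thesis by (simp add: K0 TT_def)
  next
    case (Suc j')
    show ?thesis
    proof (cases j')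
      case 0 thus ?thesis using Suc
        by (cases i) (auto simp: K1 V0 VS K0 TT_def)
    next
      case (Suc j'')
      have IH1: "\<And>i. KK r s i (Suc j'') = TT r i (Suc j'')" using 1 Suc \<open>j = Suc j'\<close> by simp
      have IH2: "\<And>i. KK r s i j'' = TT r i j''" using 1 Suc \<open>j = Suc j'\<close> by simp
      show ?thesis using Suc \<open>j = Suc j'\<close>
        by (cases i) (auto simp: KSS V0 VS IH1 IH2 TT_def min_def algebra_simps)
    qed
  qed
qed
end



lemma tridiag_det:
  fixes f :: "nat \<Rightarrow> nat \<Rightarrow> 'a :: comm_ring_1"
  assumes tri: "\<And>i j. Suc i < j \<Longrightarrow> f i j = 0" "\<And>i j. Suc j < i \<Longrightarrow> f i j = 0"
  shows "det (mat (Suc (Suc m)) (Suc (Suc m)) (\<lambda>(i,j). f i j)) =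
     f (Suc m) (Suc m) * det (mat (Suc m) (Suc m) (\<lambda>(i,j). f i j))
     - f (Suc m) m * f m (Suc m) * det (mat m m (\<lambda>(i,j). f i j))"
proof -
  define A where "A = mat (Suc (Suc m)) (Suc (Suc m)) (\<lambda>(i,j). f i j)"
  have A: "A \<in> carrier_mat (Suc (Suc m)) (Suc (Suc m))" unfolding A_def by simp
  have "det A = (\<Sum>j<Suc (Suc m). A $$ (Suc m, j) * cofactor A (Suc m) j)"
    by (rule laplace_expansion_row[OF A]) simp
  also have "\<dots> = (\<Sum>j<m. A $$ (Suc m, j) * cofactor A (Suc m) j)
     + A $$ (Suc m, m) * cofactor A (Suc m) m + A $$ (Suc m, Suc m) * cofactor A (Suc m) (Suc m)"
    by simp
  also have "(\<Sum>j<m. A $$ (Suc m, j) * cofactor A (Suc m) j) = 0"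
    by (rule sum.neutral) (auto simp: A_def tri)
  also have "mat_delete A (Suc m) (Suc m) = mat (Suc m) (Suc m) (\<lambda>(i,j). f i j)"
    by (rule eq_matI) (auto simp: A_def mat_delete_def)
  hence "cofactor A (Suc m) (Suc m) = det (mat (Suc m) (Suc m) (\<lambda>(i,j). f i j))"
    by (simp add: cofactor_def)
  finally have detA: "det A = A $$ (Suc m, m) * cofactor A (Suc m) m
     + A $$ (Suc m, Suc m) * det (mat (Suc m) (Suc m) (\<lambda>(i,j). f i j))" by simp
  define B where "B = mat_delete A (Suc m) m"
  have Bdef: "B = mat (Suc m) (Suc m) (\<lambda>(i,j). f i (if j < m then j else Suc j))"
    unfolding B_def by (rule eq_matI) (auto simp: A_def mat_delete_def)
  have B: "B \<in> carrier_mat (Suc m) (Suc m)" unfolding Bdef by simp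
  have "det B = (\<Sum>i<Suc m. B $$ (i, m) * cofactor B i m)"
    by (rule laplace_expansion_column[OF B]) simp
  also have "\<dots> = (\<Sum>i<m. B $$ (i, m) * cofactor B i m) + B $$ (m, m) * cofactor B m m"
    by simp
  also have "(\<Sum>i<m. B $$ (i, m) * cofactor B i m) = 0"
    by (rule sum.neutral) (auto simp: Bdef tri)
  also have "mat_delete B m m = mat m m (\<lambda>(i,j). f i j)"
    by (rule eq_matI) (auto simp: Bdef mat_delete_def)
  hence "cofactor B m m = det (mat m m (\<lambda>(i,j). f i j))"
    by (simp add: cofactor_def)
  finally have detB: "det B = f m (Suc m) * det (mat m m (\<lambda>(i,j). f i j))"
    by (simp add: Bdef)
  have "cofactor A (Suc m) m = - det B" by (simp add: cofactor_def B_def)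
  thus ?thesis using detA detB unfolding A_def[symmetric] by (simp add: A_def algebra_simps)
qed

lemma two_mult: "[:0, 2:] * p = pCons 0 (smult 2 p)" by simp

lemma chebU_coeff_high: "n < k \<Longrightarrow> coeff (chebU n) k = 0"
proof (induction n arbitrary: k rule: chebU.induct)
  case 1 thus ?case by (simp add: coeff_1)
next
  case 2 thus ?case by (auto simp: coeff_pCons split: nat.split)
next
  case (3 n)
  thus ?case by (auto simp: two_mult coeff_pCons split: nat.split)
qed

definition "chom x n q = (\<Sum>k\<le>n. coeff q k * x ^ (n - k) * ((1/2 - x/2) :: rat) ^ k)"

lemma poly_chebU_rpoly: "poly (chebU_rpoly n) x = chom x n (chebU n)"
  by (simp add: chebU_rpoly_def chom_def poly_sum mult.assoc)

lemma chom_rec: "chom x (Suc (Suc n)) (chebU (Suc (Suc n))) =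
   (1 - x) * chom x (Suc n) (chebU (Suc n)) - x^2 * chom x n (chebU n)"
proof -
  let ?h = "(1/2 - x/2) :: rat"
  have A: "(\<Sum>k\<le>Suc (Suc n). coeff (pCons 0 (smult 2 (chebU (Suc n)))) k * x ^ (Suc (Suc n) - k) * ?h ^ k)
      = (1 - x) * chom x (Suc n) (chebU (Suc n))"
    by (subst sum.atMost_Suc_shift) (simp add: chom_def sum_distrib_left algebra_simps del: sum.atMost_Suc)
  have B: "(\<Sum>k\<le>Suc (Suc n). coeff (chebU n) k * x ^ (Suc (Suc n) - k) * ?h ^ k)
      = (\<Sum>k\<le>n. coeff (chebU n) k * x ^ (Suc (Suc n) - k) * ?h ^ k)"
    by (rule sum.mono_neutral_right) (auto simp: chebU_coeff_high)
  also have "\<dots> = x^2 * chom x n (chebU n)"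
    unfolding chom_def sum_distrib_left
  proof (rule sum.cong[OF refl])
    fix k assume "k \<in> {..n}"
    hence "Suc (Suc n) - k = Suc (Suc (n - k))" by auto
    thus "coeff (chebU n) k * x ^ (Suc (Suc n) - k) * ?h ^ k = x\<^sup>2 * (coeff (chebU n) k * x ^ (n - k) * ?h ^ k)"
      by (simp add: power2_eq_square)
  qed
  finally have B: "(\<Sum>k\<le>Suc (Suc n). coeff (chebU n) k * x ^ (Suc (Suc n) - k) * ?h ^ k) = x^2 * chom x n (chebU n)" .
  show ?thesis
    unfolding chom_def[of x "Suc (Suc n)"] chebU.simps two_mult coeff_diff
    by (simp only: left_diff_distrib sum_subtractf A B)
qed

definition JJ :: "int \<Rightarrow> nat \<Rightarrow> nat \<Rightarrow> rat" where
  "JJ r i j = (if i = 0 \<and> j = 0 then 1 else if i = j then 1 - of_int r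
     else if (i = Suc j \<and> 0 < j) \<or> (j = Suc i \<and> 0 < i) then of_int r else 0)"

lemma JJ_TT: "JJ r i j = TT r i j - (if 0 < i then TT r (i - 1) j else 0)
   - (if 0 < j then TT r i (j - 1) else 0) + (if 0 < i \<and> 0 < j then TT r (i - 1) (j - 1) else 0)"
proof -
  consider "i = j" | "i = Suc j" | "j = Suc i" | "Suc j < i" | "Suc i < j" by arith
  then show ?thesis
    by cases (cases i; cases j; cases "i - 1"; cases "j - 1"; auto simp: JJ_def TT_def min_def algebra_simps)+
qed

lemma E_sum_left: "i < N \<Longrightarrow> (\<Sum>k = 0..<N. ((if i = k then 1 else 0) - (if i = Suc k then 1 else 0)) * (f k :: rat))
   = f i - (if 0 < i then f (i - 1) else 0)"
proof -
  have eq: "\<And>k. ((if i = k then 1 else 0) - (if i = Suc k then 1 else 0)) * f k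
     = (if i = k then f k else 0) - (if i = Suc k then f k else 0)" by simp
  show "i < N \<Longrightarrow> ?thesis"
    unfolding eq sum_subtractf by (cases i) auto
qed

lemma E_sum_right: "j < N \<Longrightarrow> (\<Sum>k = 0..<N. (f k :: rat) * ((if j = k then 1 else 0) - (if j = Suc k then 1 else 0)))
   = f j - (if 0 < j then f (j - 1) else 0)"
  using E_sum_left[of j N f] by (simp add: mult.commute)

lemma p_sum_lt: "i < N \<Longrightarrow> (\<Sum>a = 0..<N. Pmat r i a * h a) = (\<Sum>a\<le>i. Pmat r i a * h a)"
  by (rule sum.mono_neutral_right) (auto simp: p_upper)

lemma prod_list_ones: "(\<And>x. x \<in> set xs \<Longrightarrow> f x = 1) \<Longrightarrow> prod_list (map f xs) = (1::rat)"
  by (induction xs) auto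

lemma det_conj: assumes A: "A \<in> carrier_mat N N" and B: "B \<in> carrier_mat N N" and d: "det A = (1::rat)"
  shows "det (A * B * transpose_mat A) = det B"
proof -
  have "det (A * B * transpose_mat A) = det (A * B) * det (transpose_mat A)"
    by (rule det_mult) (use A B in auto)
  also have "\<dots> = det B" using A B d by (simp add: det_mult det_transpose)
  finally show ?thesis .
qed

lemma JJ_det: "det (mat (Suc n) (Suc n) (\<lambda>(i,j). JJ r i j)) = chom (of_int r) n (chebU n)"
proof (induction n rule: chebU.induct)
  case 1
  show ?case by (subst det_single) (auto simp: JJ_def chom_def)
next
  case 2
  have "det (mat (Suc (Suc 0)) (Suc (Suc 0)) (\<lambda>(i,j). JJ r i j)) =
     JJ r (Suc 0) (Suc 0) * det (mat (Suc 0) (Suc 0) (\<lambda>(i,j). JJ r i j))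
     - JJ r (Suc 0) 0 * JJ r 0 (Suc 0) * det (mat 0 0 (\<lambda>(i,j). JJ r i j))"
    by (rule tridiag_det) (auto simp: JJ_def)
  also have "det (mat (Suc 0) (Suc 0) (\<lambda>(i,j). JJ r i j)) = 1"
    by (subst det_single) (auto simp: JJ_def)
  finally show ?case by (simp add: JJ_def chom_def)
next
  case (3 n)
  have "det (mat (Suc (Suc (Suc n))) (Suc (Suc (Suc n))) (\<lambda>(i,j). JJ r i j)) =
     JJ r (Suc (Suc n)) (Suc (Suc n)) * det (mat (Suc (Suc n)) (Suc (Suc n)) (\<lambda>(i,j). JJ r i j))
     - JJ r (Suc (Suc n)) (Suc n) * JJ r (Suc n) (Suc (Suc n)) * det (mat (Suc n) (Suc n) (\<lambda>(i,j). JJ r i j))"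
    by (rule tridiag_det) (auto simp: JJ_def)
  also have "\<dots> = (1 - of_int r) * chom (of_int r) (Suc n) (chebU (Suc n)) - (of_int r)^2 * chom (of_int r) n (chebU n)"
    using 3 by (simp add: JJ_def power2_eq_square)
  also have "\<dots> = chom (of_int r) (Suc (Suc n)) (chebU (Suc (Suc n)))"
    by (simp only: chom_rec)
  finally show ?case .
qed

context
  fixes r :: int and M :: "nat \<Rightarrow> nat \<Rightarrow> rat" and s :: "nat \<Rightarrow> rat"
  assumes M_lower: "\<And>n k. n < k \<Longrightarrow> M n k = 0"
    and M_inv: "\<And>n k. (\<Sum>j\<le>n. Pmat r n j * M j k) = (if n = k then 1 else 0)"
    and s_def: "\<And>n. s n = (\<Sum>k\<le>n. M n k)"
begin

lemma hankel_det: "det (mat N N (\<lambda>(i, j). s (i + j))) = det (mat N N (\<lambda>(i,j). JJ r i j))"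
proof -
  define Hm where "Hm = mat N N (\<lambda>(i, j). s (i + j))"
  define Pm where "Pm = mat N N (\<lambda>(i, j). Pmat r i j)"
  define Km where "Km = mat N N (\<lambda>(i, j). KK r s i j)"
  define Em where "Em = mat N N (\<lambda>(i, j). ((if i = j then 1 else 0) - (if i = Suc j then 1 else 0)) :: rat)"
  define Jm where "Jm = mat N N (\<lambda>(i, j). JJ r i j)"
  have c: "Hm \<in> carrier_mat N N" "Pm \<in> carrier_mat N N" "Km \<in> carrier_mat N N" "Em \<in> carrier_mat N N"
    by (auto simp: Hm_def Pm_def Km_def Em_def)
  have dP: "det Pm = 1"
    by (subst det_lower_triangular[of N]) (auto simp: Pm_def p_upper p_diag diag_mat_def intro!: prod_list_ones)
  have dE: "det Em = 1"
    by (subst det_lower_triangular[of N]) (auto simp: Em_def diag_mat_def intro!: prod_list_ones)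
  have K: "Pm * Hm * transpose_mat Pm = Km"
  proof (rule eq_matI)
    fix i j assume i: "i < dim_row Km" and j: "j < dim_col Km"
    hence i: "i < N" and j: "j < N" by (auto simp: Km_def)
    have "(Pm * Hm * transpose_mat Pm) $$ (i, j) = (\<Sum>k = 0..<N. (\<Sum>a = 0..<N. Pmat r i a * s (a + k)) * Pmat r j k)"
      using i j by (simp add: Pm_def Hm_def scalar_prod_def sum_distrib_right)
    also have "\<dots> = (\<Sum>k = 0..<N. Pmat r j k * ww r s i k)"
      using i by (simp add: p_sum_lt ww_def mult.commute)
    also have "\<dots> = KK r s i j" using j by (simp add: p_sum_lt KK_def)
    finally show "(Pm * Hm * transpose_mat Pm) $$ (i, j) = Km $$ (i, j)" using i j by (simp add: Km_def)
  qed (auto simp: Km_def Pm_def Hm_def)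
  have J: "Em * Km * transpose_mat Em = Jm"
  proof (rule eq_matI)
    fix i j assume i: "i < dim_row Jm" and j: "j < dim_col Jm"
    hence i: "i < N" and j: "j < N" by (auto simp: Jm_def)
    have "(Em * Km * transpose_mat Em) $$ (i, j) = (\<Sum>k = 0..<N. (\<Sum>a = 0..<N.
         ((if i = a then 1 else 0) - (if i = Suc a then 1 else 0)) * KK r s a k) *
         ((if j = k then 1 else 0) - (if j = Suc k then 1 else 0)))"
      using i j by (simp add: Em_def Km_def scalar_prod_def)
    also have "\<dots> = (\<Sum>k = 0..<N. (KK r s i k - (if 0 < i then KK r s (i - 1) k else 0)) *
         ((if j = k then 1 else 0) - (if j = Suc k then 1 else 0)))"
      using i by (simp only: E_sum_left)
    also have "\<dots> = KK r s i j - (if 0 < i then KK r s (i - 1) j else 0)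
       - ((KK r s i (j - 1) - (if 0 < i then KK r s (i - 1) (j - 1) else 0)) * (if 0 < j then 1 else 0))"
      using j by (subst E_sum_right) auto
    also have "\<dots> = JJ r i j" by (simp add: JJ_TT K_closed[OF M_lower M_inv s_def])
    finally show "(Em * Km * transpose_mat Em) $$ (i, j) = Jm $$ (i, j)" using i j by (simp add: Jm_def)
  qed (auto simp: Km_def Em_def Jm_def)
  have "det Hm = det Km" using det_conj[OF c(2) c(1) dP] K by simp
  also have "\<dots> = det Jm" using det_conj[OF c(4) c(3) dE] J by simp
  finally show ?thesis by (simp add: Hm_def Jm_def)
qed
end

theorem mainTheorem6:
  fixes r :: int and M :: "nat \<Rightarrow> nat \<Rightarrow> rat" and s :: "nat \<Rightarrow> rat"
  assumes M_lower: "\<And>n k. n < k \<Longrightarrow> M n k = 0"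
    and M_inv: "\<And>n k. (\<Sum>j\<le>n. Pmat r n j * M j k) = (if n = k then 1 else 0)"
    and s_def: "\<And>n. s n = (\<Sum>k\<le>n. M n k)"
  shows "\<forall>n. det (mat (n + 1) (n + 1) (\<lambda>(i, j). s (i + j))) = poly (chebU_rpoly n) (of_int r)"
proof
  fix n
  show "det (mat (n + 1) (n + 1) (\<lambda>(i, j). s (i + j))) = poly (chebU_rpoly n) (of_int r)"
    using hankel_det[OF M_lower M_inv s_def, of "Suc n"] JJ_det[of n r]
    by (simp add: poly_chebU_rpoly)
qed

end
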